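(* Let $\Gamma\in(0,1]$, $d_0\in(0,1)$, $r=1-\Gamma+\Gamma d_0$, and let $(b(t),d(t))$ be the solution of $\dot b=d$, $\dot d=\frac{\Gamma d}{1-\Gamma b}(1-b-d)-d$ with $b(0)=0$, $d(0)=d_0$; set $a(t)=b(t)+d(t)$. Then $a$ is strictly increasing on $[0,\infty)$ with $a(0)=d_0$ and $\lim_{t\to\infty}a(t)=d_0/r$; in particular no $t$ satisfies $a(t)\ge\beta$ when $\beta\ge d_0/r$. For every $\beta\in[d_0,d_0/r)$ and $t\ge0$, one has $a(t)\ge\beta$ if and only if $t\ge T(\beta,d_0,\Gamma)$, where $$T(\beta,d_0,\Gamma)=\frac1r\ln\left(\frac{1-r}{1-\frac{\beta}{d_0}r}\right).$$ *)

theory Defs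
  imports Complex_Main
begin

definition r_param :: "real \<Rightarrow> real \<Rightarrow> real" where
  "r_param d0 \<Gamma> = 1 - \<Gamma> + \<Gamma> * d0"

definition T_time :: "real \<Rightarrow> real \<Rightarrow> real \<Rightarrow> real" where
  "T_time \<beta> d0 \<Gamma> = (1 / r_param d0 \<Gamma>) *
     ln ((1 - r_param d0 \<Gamma>) / (1 - (\<beta> / d0) * r_param d0 \<Gamma>))"

end

theory Submission
  imports Defs "HOL-Analysis.Analysis" "HOL-Real_Asymp.Real_Asymp"
begin

theorem theorem5:
  fixes \<Gamma> d0 :: real and b d :: "real \<Rightarrow> real"
  assumes hG: "0 < \<Gamma>" "\<Gamma> \<le> 1"
    and hd0: "0 < d0" "d0 < 1"
    and hb: "\<And>t. t \<ge> 0 \<Longrightarrow> (b has_real_derivative d t) (at t within {0..})"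
    and hd: "\<And>t. t \<ge> 0 \<Longrightarrow>
       (d has_real_derivative
          (\<Gamma> * d t / (1 - \<Gamma> * b t) * (1 - b t - d t) - d t)) (at t within {0..})"
    and init: "b 0 = 0" "d 0 = d0"
  shows "strict_mono_on {0..} (\<lambda>t. b t + d t)
    \<and> b 0 + d 0 = d0
    \<and> ((\<lambda>t. b t + d t) \<longlongrightarrow> d0 / r_param d0 \<Gamma>) at_top
    \<and> (\<forall>\<beta>. \<beta> \<ge> d0 / r_param d0 \<Gamma> \<longrightarrow> \<not> (\<exists>t\<ge>0. b t + d t \<ge> \<beta>))
    \<and> (\<forall>\<beta> t. d0 \<le> \<beta> \<and> \<beta> < d0 / r_param d0 \<Gamma> \<and> t \<ge> 0 \<longrightarrow>
          (b t + d t \<ge> \<beta> \<longleftrightarrow> t \<ge> T_time \<beta> d0 \<Gamma>))"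
proof -
  define r where "r = r_param d0 \<Gamma>"
  have r1: "1 - r = \<Gamma> * (1 - d0)" unfolding r_def r_param_def by (simp add: algebra_simps)
  have g1: "\<Gamma> * (1 - d0) > 0" using hG hd0 by simp
  have g2: "\<Gamma> * (1 - d0) < 1" using hG hd0 
    by (smt (verit, best) mult_le_cancel_left1 )
  have rpos: "0 < r" using r1 g2 by simp
  have rlt1: "r < 1" using r1 g1 by simp
  have Gb: "\<Gamma> * (d0 / r) \<le> 1"
  proof -
    have "\<Gamma> * d0 \<le> r" unfolding r_def r_param_def using hG by simp
    thus ?thesis using rpos by (simp add: field_simps)
  qed
  define B where "B t = d0 / r * (1 - exp (- r * t))" for t
  have contb: "continuous_on {0..} b"
    by (metis hb atLeast_iff DERIV_continuous continuous_on_eq_continuous_within)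
  have qder: "((\<lambda>s. (d s + r * b s - d0) / (1 - \<Gamma> * b s)) has_real_derivative 0) (at t within {0..})"
    if that: "t \<ge> 0" "1 - \<Gamma> * b t \<noteq> 0" for t
  proof -
    have D: "((\<lambda>s. (d s + r * b s - d0) / (1 - \<Gamma> * b s)) has_real_derivative
       (((\<Gamma> * d t / (1 - \<Gamma> * b t) * (1 - b t - d t) - d t) + r * d t - 0) * (1 - \<Gamma> * b t)
         - (d t + r * b t - d0) * (0 - \<Gamma> * d t)) / ((1 - \<Gamma> * b t) * (1 - \<Gamma> * b t))) (at t within {0..})"
      by (rule DERIV_divide[OF DERIV_diff[OF DERIV_add[OF hd[OF that(1)] DERIV_cmult[OF hb[OF that(1)]]] DERIV_const]
            DERIV_diff[OF DERIV_const DERIV_cmult[OF hb[OF that(1)]]]]) (use that in simp)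
    have "(((\<Gamma> * d t / (1 - \<Gamma> * b t) * (1 - b t - d t) - d t) + r * d t) * (1 - \<Gamma> * b t)
         - (d t + r * b t - d0) * (- (\<Gamma> * d t))) = 0"
    proof -
      have "(\<Gamma> * d t / (1 - \<Gamma> * b t) * (1 - b t - d t)) * (1 - \<Gamma> * b t) = \<Gamma> * d t * (1 - b t - d t)"
        using that(2) by simp
      hence "(((\<Gamma> * d t / (1 - \<Gamma> * b t) * (1 - b t - d t) - d t) + r * d t) * (1 - \<Gamma> * b t)
         - (d t + r * b t - d0) * (- (\<Gamma> * d t))) = 
         \<Gamma> * d t * (1 - b t - d t) - (1 - r) * d t * (1 - \<Gamma> * b t) + (d t + r * b t - d0) * (\<Gamma> * d t)"
        by (simp add: algebra_simps)
      also have "\<dots> = d t * (\<Gamma> * (1 - d0) - (1 - r))" by algebra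
      also have "\<dots> = 0" using r1 by simp
      finally show ?thesis .
    qed
    then show ?thesis using D by simp
  qed
  have key: "b t = B t" if u: "u \<ge> 0" "\<And>s. 0 \<le> s \<Longrightarrow> s < u \<Longrightarrow> 1 - \<Gamma> * b s > 0"
    and t: "0 \<le> t" "t \<le> u" for u t
  proof -
    have e0: "d s = d0 - r * b s" if "0 \<le> s" "s < u" for s
    proof -
      have "\<exists>c. \<forall>x\<in>{0..<u}. (d x + r * b x - d0) / (1 - \<Gamma> * b x) = c"
      proof (rule has_field_derivative_zero_constant)
        show "convex {0..<u}" by simp
        fix x assume x: "x \<in> {0..<u}"
        show "((\<lambda>s. (d s + r * b s - d0) / (1 - \<Gamma> * b s)) has_field_derivative 0) (at x within {0..<u})"
          using qder[of x] x u(2)[of x] by (auto intro: DERIV_subset)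
      qed
      then obtain c where c: "\<forall>x\<in>{0..<u}. (d x + r * b x - d0) / (1 - \<Gamma> * b x) = c" by blast
      have "c = 0" using c[rule_format, of 0] that init by simp
      hence "(d s + r * b s - d0) / (1 - \<Gamma> * b s) = 0" using c that by simp
      thus ?thesis using u(2)[OF that] by simp
    qed
    define w where "w s = (b s - d0 / r) * exp (r * s)" for s
    have "w t = w 0"
    proof (rule has_derivative_zero_unique_strong_interval[of "{u}" 0 u w "w 0"])
      show "finite {u}" by simp
      show "continuous_on {0..u} w" unfolding w_def
        by (intro continuous_intros continuous_on_subset[OF contb]) auto
      show "w 0 = w 0" ..
      show "t \<in> {0..u}" using t by simp
      fix x assume x: "x \<in> {0..u} - {u}"
      have "(w has_real_derivative (d x * exp (r * x) + (b x - d0 / r) * (exp (r * x) * r))) (at x within {0..})"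
        unfolding w_def using x hb[of x]
        by (auto intro!: derivative_eq_intros)
      moreover have "d x * exp (r * x) + (b x - d0 / r) * (exp (r * x) * r) = 0"
      proof -
        have "d x * exp (r * x) + (b x - d0 / r) * (exp (r * x) * r) = exp (r * x) * (d x + r * b x - d0)"
          using rpos by (simp add: field_simps)
        thus ?thesis using e0[of x] x by simp
      qed
      ultimately have "(w has_real_derivative 0) (at x within {0..u})"
        by (auto intro: DERIV_subset)
      thus "(w has_derivative (\<lambda>h. 0)) (at x within {0..u})"
      proof -
        have A: "(*) 0 = (\<lambda>_. 0 :: real)" by (intro ext) simp
        show ?thesis using \<open>(w has_real_derivative 0) (at x within {0..u})\<close>
          by (simp add: has_field_derivative_def A)
      qed
    qed
    hence "(b t - d0 / r) * exp (r * t) = - d0 / r" using init by (simp add: w_def)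
    hence "b t - d0 / r = (- d0 / r) / exp (r * t)"
      by (metis exp_not_eq_zero nonzero_mult_div_cancel_right)
    hence "b t - d0 / r = (- d0 / r) * exp (- r * t)" by (simp add: exp_minus divide_inverse)
    thus ?thesis unfolding B_def by (simp add: algebra_simps)
  qed
  have Blt: "B t < d0 / r" for t
    unfolding B_def using rpos hd0 by (simp add: field_simps)
  have pos: "1 - \<Gamma> * b t > 0" if "t \<ge> 0" for t
  proof (rule ccontr)
    assume neg: "\<not> 1 - \<Gamma> * b t > 0"
    define S where "S = {0..t} \<inter> (\<lambda>s. 1 - \<Gamma> * b s) -` {..0}"
    have Sm: "s \<in> S \<longleftrightarrow> 0 \<le> s \<and> s \<le> t \<and> 1 - \<Gamma> * b s \<le> 0" for s
      unfolding S_def by auto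
    have "closed S"
    proof -
      have "continuous_on {0..t} (\<lambda>s. 1 - \<Gamma> * b s)"
        by (intro continuous_intros continuous_on_subset[OF contb]) auto
      from continuous_closed_preimage[OF this closed_atLeastAtMost closed_atMost[of 0]]
      show ?thesis unfolding S_def .
    qed
    moreover have "t \<in> S" using neg that Sm by simp
    moreover have "bdd_below S" using Sm by (intro bdd_belowI[of _ 0]) auto
    ultimately have inS: "Inf S \<in> S" using closed_contains_Inf by blast
    define t1 where "t1 = Inf S"
    have t10: "t1 \<ge> 0" using inS Sm unfolding t1_def by simp
    have "1 - \<Gamma> * b s > 0" if "0 \<le> s" "s < t1" for s
    proof (rule ccontr)
      assume "\<not> 1 - \<Gamma> * b s > 0"
      moreover have "s \<le> t" using that inS Sm unfolding t1_def by force
      ultimately have "s \<in> S" using that Sm by simp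
      hence "t1 \<le> s" unfolding t1_def using \<open>bdd_below S\<close> by (simp add: cInf_lower)
      thus False using that by simp
    qed
    from key[OF t10 this t10 order_refl] have "b t1 = B t1" .
    hence "\<Gamma> * b t1 < 1" using Blt[of t1] Gb hG
      by (smt (verit) mult_strict_left_mono)
    thus False using inS Sm unfolding t1_def by force
  qed
  have bB: "b t = B t" if "t \<ge> 0" for t
    using key[of t t] pos that by simp
  have dB: "d t = d0 - r * B t" if "t \<ge> 0" for t
  proof -
    have "\<exists>c. \<forall>x\<in>{0..}. (d x + r * b x - d0) / (1 - \<Gamma> * b x) = c"
    proof (rule has_field_derivative_zero_constant)
      show "convex {0::real..}" by simp
      fix x :: real assume x: "x \<in> {0..}"
      show "((\<lambda>s. (d s + r * b s - d0) / (1 - \<Gamma> * b s)) has_field_derivative 0) (at x within {0..})"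
        using qder[of x] x pos[of x] by auto
    qed
    then obtain c where c: "\<forall>x\<in>{0..}. (d x + r * b x - d0) / (1 - \<Gamma> * b x) = c" by blast
    have "c = 0" using c[rule_format, of 0] init by simp
    hence "(d t + r * b t - d0) / (1 - \<Gamma> * b t) = 0" using c that by simp
    thus ?thesis using pos[OF that] bB[OF that] by simp
  qed
  define c where "c = d0 * (1 - r) / r"
  have cpos: "c > 0" unfolding c_def using rpos rlt1 hd0 by simp
  have aform: "b t + d t = d0 / r - c * exp (- r * t)" if "t \<ge> 0" for t
    using bB[OF that] dB[OF that] rpos unfolding B_def c_def by (simp add: field_simps)
  have rr: "r_param d0 \<Gamma> = r" unfolding r_def ..
  have lim0: "((\<lambda>t. exp (- r * t)) \<longlongrightarrow> 0) at_top" using rpos by real_asymp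
  show ?thesis unfolding rr
  proof (intro conjI allI impI)
    show "strict_mono_on {0..} (\<lambda>t. b t + d t)"
    proof (rule strict_mono_onI)
      fix x y :: real assume xy: "x \<in> {0..}" "y \<in> {0..}" "x < y"
      have "exp (- r * y) < exp (- r * x)" using xy rpos by simp
      hence "c * exp (- r * y) < c * exp (- r * x)" using cpos by simp
      thus "b x + d x < b y + d y" using aform xy by simp
    qed
    show "b 0 + d 0 = d0" using init by simp
    have "((\<lambda>t. d0 / r - c * exp (- r * t)) \<longlongrightarrow> d0 / r - c * 0) at_top"
      by (intro tendsto_intros lim0)
    hence L: "((\<lambda>t. d0 / r - c * exp (- r * t)) \<longlongrightarrow> d0 / r) at_top" by simp
    show "((\<lambda>t. b t + d t) \<longlongrightarrow> d0 / r) at_top"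
    proof (rule Lim_transform_eventually[OF L])
      show "\<forall>\<^sub>F t in at_top. d0 / r - c * exp (- r * t) = b t + d t"
        using eventually_ge_at_top[of 0] by eventually_elim (simp add: aform)
    qed
  next
    fix \<beta> :: real assume \<beta>: "d0 / r \<le> \<beta>"
    show "\<not> (\<exists>t\<ge>0. \<beta> \<le> b t + d t)"
    proof
      assume "\<exists>t\<ge>0. \<beta> \<le> b t + d t"
      then obtain t where t: "t \<ge> 0" "\<beta> \<le> b t + d t" by blast
      have "c * exp (- r * t) > 0" using cpos by simp
      thus False using aform[OF t(1)] t(2) \<beta> by simp
    qed
  next
    fix \<beta> t :: real assume A: "d0 \<le> \<beta> \<and> \<beta> < d0 / r \<and> 0 \<le> t"
    have D: "d0 / r - \<beta> > 0" using A by simp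
    have D2: "d0 - \<beta> * r > 0" using A rpos by (simp add: field_simps)
    have X: "(1 - r) / (1 - \<beta> / d0 * r) = c / (d0 / r - \<beta>)"
      unfolding c_def using hd0 rpos D2 by (simp add: field_simps)
    define y where "y = (d0 / r - \<beta>) / c"
    have ypos: "y > 0" unfolding y_def using D cpos by simp
    have "\<beta> \<le> b t + d t \<longleftrightarrow> c * exp (- r * t) \<le> d0 / r - \<beta>"
      using aform A by auto
    also have "\<dots> \<longleftrightarrow> exp (- r * t) \<le> y"
      unfolding y_def using cpos by (simp add: pos_le_divide_eq mult.commute)
    also have "\<dots> \<longleftrightarrow> exp (- r * t) \<le> exp (ln y)" using ypos by simp
    also have "\<dots> \<longleftrightarrow> - r * t \<le> ln y" by simp
    also have "ln y = - ln (c / (d0 / r - \<beta>))"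
      unfolding y_def using D cpos by (simp add: ln_div)
    also have "- r * t \<le> - ln (c / (d0 / r - \<beta>)) \<longleftrightarrow> (1 / r) * ln (c / (d0 / r - \<beta>)) \<le> t"
      using rpos by (simp add: field_simps)
    also have "(1 / r) * ln (c / (d0 / r - \<beta>)) = T_time \<beta> d0 \<Gamma>"
      unfolding T_time_def rr X ..
    finally show "\<beta> \<le> b t + d t \<longleftrightarrow> T_time \<beta> d0 \<Gamma> \<le> t" .
  qed
qed

end
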